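(* Let $R$ and $S$ be commutative rings with identity, $f:R\to S$ a ring homomorphism, and $J$ a nonzero proper ideal of $S$. Suppose that $\operatorname{Spec}(S)\setminus V(J)$ is compactly packed. Then for any family $\{\mathfrak{q}_\delta\}_{\delta\in\Delta}$ of elements of $\operatorname{Spec}(S)\setminus V(J)$, the subset $\{\overline{\mathfrak{q}_\delta}^f\}_{\delta\in\Delta}$ of $\operatorname{Spec}(R\bowtie^f J)$ is compactly packed.
   Context: $R\bowtie^f J:=\{(r,f(r)+j)\mid r\in R,\ j\in J\}$, a subring of $R\times S$. $V(J)$ is the set of prime ideals of $S$ containing $J$. For a prime ideal $\mathfrak{q}$ of $S$ with $J\not\subseteq\mathfrak{q}$, $\overline{\mathfrak{q}}^f:=\{(r,f(r)+j)\mid r\in R,\ j\in J,\ f(r)+j\in\mathfrak{q}\}$, which is a prime ideal of $R\bowtie^f J$. For a commutative ring $A$, a subset $X\subseteq\operatorname{Spec}(A)$ is compactly packed if whenever an ideal $I$ of $A$ is contained in the union of a family $\{\mathfrak{p}_i\}_i$ of elements of $X$, then $I\subseteq\mathfrak{p}_i$ for some $i$. *)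

theory Defs
  imports "HOL-Algebra.Algebra"
begin

definition Spec :: "('a, 'm) ring_scheme \<Rightarrow> 'a set set" where
  "Spec A = {P. primeideal P A}"

definition VJ :: "('a, 'm) ring_scheme \<Rightarrow> 'a set \<Rightarrow> 'a set set" where
  "VJ A J = {P \<in> Spec A. J \<subseteq> P}"

definition amalg :: "('a, 'm) ring_scheme \<Rightarrow> ('b, 'n) ring_scheme \<Rightarrow> ('a \<Rightarrow> 'b) \<Rightarrow> 'b set
    \<Rightarrow> ('a \<times> 'b) ring" where
  "amalg R S f J =
    \<lparr> partial_object.carrier = {(r, f r \<oplus>\<^bsub>S\<^esub> j) | r j. r \<in> carrier R \<and> j \<in> J},
      monoid.mult = (\<lambda>x y. (fst x \<otimes>\<^bsub>R\<^esub> fst y, snd x \<otimes>\<^bsub>S\<^esub> snd y)),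
      monoid.one = (\<one>\<^bsub>R\<^esub>, \<one>\<^bsub>S\<^esub>),
      ring.zero = (\<zero>\<^bsub>R\<^esub>, \<zero>\<^bsub>S\<^esub>),
      ring.add = (\<lambda>x y. (fst x \<oplus>\<^bsub>R\<^esub> fst y, snd x \<oplus>\<^bsub>S\<^esub> snd y)) \<rparr>"

definition qbar :: "('a, 'm) ring_scheme \<Rightarrow> ('b, 'n) ring_scheme \<Rightarrow> ('a \<Rightarrow> 'b) \<Rightarrow> 'b set
    \<Rightarrow> 'b set \<Rightarrow> ('a \<times> 'b) set" where
  "qbar R S f J q =
    {(r, f r \<oplus>\<^bsub>S\<^esub> j) | r j. r \<in> carrier R \<and> j \<in> J \<and> f r \<oplus>\<^bsub>S\<^esub> j \<in> q}"

definition compactly_packed :: "('a, 'm) ring_scheme \<Rightarrow> 'a set set \<Rightarrow> bool" where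
  "compactly_packed A Xs \<longleftrightarrow>
    (\<forall>K Ps. ideal K A \<longrightarrow> Ps \<subseteq> Xs \<longrightarrow> K \<subseteq> \<Union>Ps \<longrightarrow> (\<exists>P\<in>Ps. K \<subseteq> P))"

end

theory Submission
  imports Defs
begin

lemma amalg_simps:
  "carrier (amalg R S f J) = {(r, f r \<oplus>\<^bsub>S\<^esub> j) | r j. r \<in> carrier R \<and> j \<in> J}"
  "x \<otimes>\<^bsub>amalg R S f J\<^esub> y = (fst x \<otimes>\<^bsub>R\<^esub> fst y, snd x \<otimes>\<^bsub>S\<^esub> snd y)"
  "x \<oplus>\<^bsub>amalg R S f J\<^esub> y = (fst x \<oplus>\<^bsub>R\<^esub> fst y, snd x \<oplus>\<^bsub>S\<^esub> snd y)"
  "\<zero>\<^bsub>amalg R S f J\<^esub> = (\<zero>\<^bsub>R\<^esub>, \<zero>\<^bsub>S\<^esub>)"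
  by (simp_all add: amalg_def)

theorem proposition4p5:
  fixes R :: "('a, 'm) ring_scheme" and S :: "('b, 'n) ring_scheme"
    and f :: "'a \<Rightarrow> 'b" and J :: "'b set" and q :: "'c \<Rightarrow> 'b set" and \<Delta> :: "'c set"
  assumes "cring R" and "cring S" and "f \<in> ring_hom R S"
    and "ideal J S" and "J \<noteq> {\<zero>\<^bsub>S\<^esub>}" and "J \<noteq> carrier S"
    and "compactly_packed S (Spec S - VJ S J)"
    and "\<forall>\<delta>\<in>\<Delta>. q \<delta> \<in> Spec S - VJ S J"
  shows "compactly_packed (amalg R S f J) ((\<lambda>\<delta>. qbar R S f J (q \<delta>)) ` \<Delta>)"
  unfolding compactly_packed_def
proof (intro allI impI)
  fix K Ps
  assume K: "ideal K (amalg R S f J)" and Ps: "Ps \<subseteq> (\<lambda>\<delta>. qbar R S f J (q \<delta>)) ` \<Delta>"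
    and KU: "K \<subseteq> \<Union>Ps"
  let ?A = "amalg R S f J"
  interpret R: cring R by fact
  interpret S: cring S by fact
  interpret J: ideal J S by fact
  interpret K: ideal K ?A by (rule K)
  have f0: "f \<zero>\<^bsub>R\<^esub> = \<zero>\<^bsub>S\<^esub>"
    using ring_hom_zero[OF assms(3) R.ring_axioms S.ring_axioms] .
  have fc: "\<And>r. r \<in> carrier R \<Longrightarrow> f r \<in> carrier S"
    using ring_hom_closed[OF assms(3)] by simp
  have Jc: "\<And>j. j \<in> J \<Longrightarrow> j \<in> carrier S" using J.a_subset by blast
  have qprime: "\<And>\<delta>. \<delta> \<in> \<Delta> \<Longrightarrow> primeideal (q \<delta>) S \<and> \<not> J \<subseteq> q \<delta>"
    using assms(8) by (auto simp: Spec_def VJ_def)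
  have zj: "\<And>j. j \<in> J \<Longrightarrow> (\<zero>\<^bsub>R\<^esub>, j) \<in> carrier ?A"
  proof -
    fix j assume j: "j \<in> J"
    have "(\<zero>\<^bsub>R\<^esub>, f \<zero>\<^bsub>R\<^esub> \<oplus>\<^bsub>S\<^esub> j) \<in> carrier ?A"
      unfolding amalg_simps using j by blast
    thus "(\<zero>\<^bsub>R\<^esub>, j) \<in> carrier ?A" using f0 j Jc by simp
  qed
  have qbar0: "\<And>Q y. (\<zero>\<^bsub>R\<^esub>, y) \<in> qbar R S f J Q \<Longrightarrow> y \<in> Q"
    unfolding qbar_def by auto
  have qbarI: "\<And>Q r s. (r, s) \<in> carrier ?A \<Longrightarrow> s \<in> Q \<Longrightarrow> (r, s) \<in> qbar R S f J Q"
    unfolding qbar_def amalg_simps by auto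
  define D where "D = {\<delta>\<in>\<Delta>. qbar R S f J (q \<delta>) \<in> Ps}"
  have PsD: "Ps = (\<lambda>\<delta>. qbar R S f J (q \<delta>)) ` D"
    using Ps unfolding D_def by auto
  have YS: "q ` D \<subseteq> Spec S - VJ S J" using assms(8) D_def by auto
  define I where "I = {x \<in> carrier S. \<forall>j\<in>J. (\<zero>\<^bsub>R\<^esub>, j \<otimes>\<^bsub>S\<^esub> x) \<in> K}"
  have mulK: "\<And>j r s. j \<in> J \<Longrightarrow> (r, s) \<in> K \<Longrightarrow> (\<zero>\<^bsub>R\<^esub>, j \<otimes>\<^bsub>S\<^esub> s) \<in> K"
  proof -
    fix j r s assume j: "j \<in> J" and rs: "(r, s) \<in> K"
    have "(\<zero>\<^bsub>R\<^esub>, j) \<otimes>\<^bsub>?A\<^esub> (r, s) \<in> K" using K.I_l_closed[OF rs zj[OF j]] .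
    moreover have "r \<in> carrier R" using rs K.a_subset unfolding amalg_simps by auto
    ultimately show "(\<zero>\<^bsub>R\<^esub>, j \<otimes>\<^bsub>S\<^esub> s) \<in> K" unfolding amalg_simps by simp
  qed
  have Iideal: "ideal I S"
  proof (rule idealI)
    show "ring S" by (rule S.ring_axioms)
    show "subgroup I (add_monoid S)"
    proof (rule subgroup.intro)
      show "I \<subseteq> carrier (add_monoid S)" unfolding I_def by auto
      show "\<one>\<^bsub>add_monoid S\<^esub> \<in> I"
      proof -
        have "(\<zero>\<^bsub>R\<^esub>, \<zero>\<^bsub>S\<^esub>) \<in> K" using additive_subgroup.zero_closed[OF K.is_additive_subgroup] by (simp only: amalg_simps)
        thus ?thesis unfolding I_def using Jc by simp
      qed
      fix x y assume x: "x \<in> I" and y: "y \<in> I"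
      show "x \<otimes>\<^bsub>add_monoid S\<^esub> y \<in> I"
        unfolding I_def
      proof (simp, intro conjI ballI)
        show "x \<oplus>\<^bsub>S\<^esub> y \<in> carrier S" using x y unfolding I_def by auto
        fix j assume j: "j \<in> J"
        have "(\<zero>\<^bsub>R\<^esub>, j \<otimes>\<^bsub>S\<^esub> x) \<oplus>\<^bsub>?A\<^esub> (\<zero>\<^bsub>R\<^esub>, j \<otimes>\<^bsub>S\<^esub> y) \<in> K"
          using x y j unfolding I_def by (auto intro: K.a_closed)
        thus "(\<zero>\<^bsub>R\<^esub>, j \<otimes>\<^bsub>S\<^esub> (x \<oplus>\<^bsub>S\<^esub> y)) \<in> K"
          using x y j Jc unfolding I_def amalg_simps by (simp add: S.r_distr)
      next
      qed
      show "inv\<^bsub>add_monoid S\<^esub> x \<in> I"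
        unfolding I_def
      proof (simp add: a_inv_def[symmetric], intro conjI ballI)
        show "\<ominus>\<^bsub>S\<^esub> x \<in> carrier S" using x unfolding I_def by auto
        fix j assume j: "j \<in> J"
        have "(\<zero>\<^bsub>R\<^esub>, (\<ominus>\<^bsub>S\<^esub> j) \<otimes>\<^bsub>S\<^esub> x) \<in> K"
          using x j J.a_inv_closed unfolding I_def by auto
        thus "(\<zero>\<^bsub>R\<^esub>, j \<otimes>\<^bsub>S\<^esub> (\<ominus>\<^bsub>S\<^esub> x)) \<in> K"
          using x j Jc unfolding I_def by (simp add: S.l_minus S.r_minus)
      qed
    qed
  next
    fix a x assume a: "a \<in> I" and x: "x \<in> carrier S"
    have "\<forall>j\<in>J. (\<zero>\<^bsub>R\<^esub>, j \<otimes>\<^bsub>S\<^esub> (x \<otimes>\<^bsub>S\<^esub> a)) \<in> K"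
    proof
      fix j assume j: "j \<in> J"
      have "(\<zero>\<^bsub>R\<^esub>, (j \<otimes>\<^bsub>S\<^esub> x) \<otimes>\<^bsub>S\<^esub> a) \<in> K"
        using a j J.I_r_closed[OF j x] unfolding I_def by auto
      thus "(\<zero>\<^bsub>R\<^esub>, j \<otimes>\<^bsub>S\<^esub> (x \<otimes>\<^bsub>S\<^esub> a)) \<in> K"
        using a j x Jc unfolding I_def by (simp add: S.m_assoc)
    qed
    thus "x \<otimes>\<^bsub>S\<^esub> a \<in> I" "a \<otimes>\<^bsub>S\<^esub> x \<in> I"
      using a x unfolding I_def by (auto simp: S.m_comm)
  qed
  have IU: "I \<subseteq> \<Union>(q ` D)"
  proof
    fix x assume x: "x \<in> I"
    show "x \<in> \<Union>(q ` D)"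
    proof (rule ccontr)
      assume nx: "x \<notin> \<Union>(q ` D)"
      have "J \<subseteq> \<Union>(q ` D)"
      proof
        fix j assume j: "j \<in> J"
        have "(\<zero>\<^bsub>R\<^esub>, j \<otimes>\<^bsub>S\<^esub> x) \<in> \<Union>Ps" using x j KU unfolding I_def by blast
        then obtain \<delta> where d: "\<delta> \<in> D" and "(\<zero>\<^bsub>R\<^esub>, j \<otimes>\<^bsub>S\<^esub> x) \<in> qbar R S f J (q \<delta>)"
          unfolding PsD by blast
        hence jx: "j \<otimes>\<^bsub>S\<^esub> x \<in> q \<delta>" using qbar0 by blast
        have pi: "primeideal (q \<delta>) S" using qprime d D_def by auto
        have xc: "x \<in> carrier S" using x unfolding I_def by simp
        have "j \<in> q \<delta> \<or> x \<in> q \<delta>"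
          by (rule primeideal.I_prime[OF pi Jc[OF j] xc jx])
        thus "j \<in> \<Union>(q ` D)" using nx d by blast
      qed
      then obtain \<delta> where "\<delta> \<in> D" "J \<subseteq> q \<delta>"
        using assms(7) YS unfolding compactly_packed_def
        by (metis (no_types, lifting) J.ideal_axioms imageE)
      thus False using qprime D_def by auto
    qed
  qed
  obtain \<delta>0 where d0: "\<delta>0 \<in> D" and Iq: "I \<subseteq> q \<delta>0"
    using assms(7) YS IU Iideal unfolding compactly_packed_def
    by (metis (no_types, lifting) imageE)
  have "K \<subseteq> qbar R S f J (q \<delta>0)"
  proof
    fix k assume k: "k \<in> K"
    obtain r s where rs: "k = (r, s)" by fastforce
    have kc: "(r, s) \<in> carrier ?A" using k rs K.a_subset by auto
    have sc: "s \<in> carrier S" using kc fc Jc unfolding amalg_simps by auto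
    have "s \<in> I" unfolding I_def using sc mulK k rs by auto
    thus "k \<in> qbar R S f J (q \<delta>0)" using Iq qbarI kc rs by auto
  qed
  thus "\<exists>P\<in>Ps. K \<subseteq> P" using d0 PsD by auto
qed

end
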